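(* Let $r\geq 2$ and $0\leq \alpha \leq 1-\frac{1}{r}$. Let $G$ be a graph of order $n\ge 2$, let $\mathbf{x}=(x_{1}, \dots, x_{n})$ be a non-negative unit eigenvector of $A_{\alpha}(G)$ corresponding to $\lambda_{\alpha}(G)$, and let $w\in V(G)$ satisfy $x_{w}=\min \{x_{1}, \dots, x_{n}\}$. Then $$\lambda_{\alpha}(G-w)\geq \lambda_{\alpha}(G)\frac{1-2x^2_{w}}{1-x^2_{w}}-\alpha\frac{1-nx^2_{w}}{1-x^2_{w}}.$$
   Context: $A_\alpha(G)=\alpha D(G)+(1-\alpha)A(G)$, where $A(G)$ is the adjacency matrix and $D(G)$ the diagonal degree matrix of $G$; $\lambda_\alpha(G)$ is its largest eigenvalue. $G-w$ is the graph obtained by deleting vertex $w$ and its incident edges. *)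

theory Defs
  imports Complex_Main
begin

definition simple_graph :: "'a set \<Rightarrow> ('a \<Rightarrow> 'a \<Rightarrow> bool) \<Rightarrow> bool" where
  "simple_graph V E \<longleftrightarrow> finite V \<and> (\<forall>u v. E u v \<longrightarrow> u \<in> V \<and> v \<in> V)
     \<and> (\<forall>u v. E u v \<longrightarrow> E v u) \<and> (\<forall>u. \<not> E u u)"

definition degree :: "'a set \<Rightarrow> ('a \<Rightarrow> 'a \<Rightarrow> bool) \<Rightarrow> 'a \<Rightarrow> nat" where
  "degree V E v = card {u \<in> V. E v u}"

definition A_alpha :: "real \<Rightarrow> 'a set \<Rightarrow> ('a \<Rightarrow> 'a \<Rightarrow> bool) \<Rightarrow> 'a \<Rightarrow> 'a \<Rightarrow> real" where
  "A_alpha \<alpha> V E u v =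
     (if u = v then \<alpha> * real (degree V E u) else 0) + (1 - \<alpha>) * (if E u v then 1 else 0)"

definition is_eigenvector :: "('a \<Rightarrow> 'a \<Rightarrow> real) \<Rightarrow> 'a set \<Rightarrow> real \<Rightarrow> ('a \<Rightarrow> real) \<Rightarrow> bool" where
  "is_eigenvector M V lam x \<longleftrightarrow> (\<forall>v. v \<notin> V \<longrightarrow> x v = 0) \<and> (\<exists>v\<in>V. x v \<noteq> 0)
     \<and> (\<forall>u\<in>V. (\<Sum>v\<in>V. M u v * x v) = lam * x u)"

definition is_eigenvalue :: "('a \<Rightarrow> 'a \<Rightarrow> real) \<Rightarrow> 'a set \<Rightarrow> real \<Rightarrow> bool" where
  "is_eigenvalue M V lam \<longleftrightarrow> (\<exists>x. is_eigenvector M V lam x)"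

text \<open>lambda_alpha(G): the largest eigenvalue of A_alpha(G) (a real symmetric matrix,
  so all its eigenvalues are real).\<close>
definition lambda_alpha :: "real \<Rightarrow> 'a set \<Rightarrow> ('a \<Rightarrow> 'a \<Rightarrow> bool) \<Rightarrow> real" where
  "lambda_alpha \<alpha> V E = Max {lam. is_eigenvalue (A_alpha \<alpha> V E) V lam}"

definition del_vertex_V :: "'a set \<Rightarrow> 'a \<Rightarrow> 'a set" where
  "del_vertex_V V w = V - {w}"

definition del_vertex_E :: "('a \<Rightarrow> 'a \<Rightarrow> bool) \<Rightarrow> 'a \<Rightarrow> 'a \<Rightarrow> 'a \<Rightarrow> bool" where
  "del_vertex_E E w = (\<lambda>u v. E u v \<and> u \<noteq> w \<and> v \<noteq> w)"

end

theory Submission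
  imports Defs "HOL-Analysis.Analysis" "Jordan_Normal_Form.Spectral_Radius"
begin

lemma finite_eigenvalues:
  fixes M :: "'a \<Rightarrow> 'a \<Rightarrow> real"
  assumes fin: "finite V"
  shows "finite {lam. is_eigenvalue M V lam}"
proof -
  obtain f where f: "bij_betw f {0..<card V} V"
    using ex_bij_betw_nat_finite[OF fin] by blast
  define n where "n = card V"
  define B where "B = mat n n (\<lambda>(i,j). M (f i) (f j))"
  have Bc: "B \<in> carrier_mat n n" unfolding B_def by simp
  have "{lam. is_eigenvalue M V lam} \<subseteq> spectrum B"
  proof
    fix lam assume "lam \<in> {lam. is_eigenvalue M V lam}"
    then obtain x where x: "is_eigenvector M V lam x"
      unfolding is_eigenvalue_def by auto
    define v where "v = vec n (\<lambda>i. x (f i))"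
    have vc: "v \<in> carrier_vec n" unfolding v_def by simp
    from x obtain u where u: "u \<in> V" "x u \<noteq> 0" unfolding is_eigenvector_def by auto
    then obtain i where i: "i < n" "f i = u" using f unfolding n_def bij_betw_def by (metis atLeastLessThan_iff imageE)
    have "v \<noteq> 0\<^sub>v n"
    proof
      assume "v = 0\<^sub>v n"
      then have "v $ i = 0" using i by simp
      then show False using i u unfolding v_def by simp
    qed
    moreover have "B *\<^sub>v v = lam \<cdot>\<^sub>v v"
    proof (rule eq_vecI)
      fix i assume i: "i < dim_vec (lam \<cdot>\<^sub>v v)"
      then have i': "i < n" unfolding v_def by simp
      have fi: "f i \<in> V" using f i' unfolding n_def bij_betw_def by auto
      have "(B *\<^sub>v v) $ i = (\<Sum>j<n. M (f i) (f j) * x (f j))"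
        using i' unfolding B_def v_def by (simp add: mult_mat_vec_def scalar_prod_def atLeast0LessThan)
      also have "\<dots> = (\<Sum>u\<in>V. M (f i) u * x u)"
        using sum.reindex_bij_betw[OF f, of "\<lambda>u. M (f i) u * x u"] unfolding n_def
        by (simp add: atLeast0LessThan)
      also have "\<dots> = lam * x (f i)" using x fi unfolding is_eigenvector_def by auto
      finally show "(B *\<^sub>v v) $ i = (lam \<cdot>\<^sub>v v) $ i" using i' unfolding v_def by simp
    qed (simp add: B_def v_def)
    ultimately have "eigenvector B v lam" unfolding eigenvector_def using vc Bc by auto
    then show "lam \<in> spectrum B" unfolding spectrum_def eigenvalue_def by auto
  qed
  then show ?thesis using card_finite_spectrum(1)[OF Bc] finite_subset by blast
qed

definition bil :: "('a \<Rightarrow> 'a \<Rightarrow> real) \<Rightarrow> 'a set \<Rightarrow> ('a \<Rightarrow> real) \<Rightarrow> ('a \<Rightarrow> real) \<Rightarrow> real" where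
  "bil M V a b = (\<Sum>u\<in>V. \<Sum>v\<in>V. a u * M u v * b v)"

lemma bil_expand:
  "bil M V (\<lambda>i. a i + t * b i) (\<lambda>i. a i + t * b i)
     = bil M V a a + t * (bil M V a b + bil M V b a) + t\<^sup>2 * bil M V b b"
proof -
  have "\<And>u v. (a u + t * b u) * M u v * (a v + t * b v)
     = a u * M u v * a v + t * (a u * M u v * b v + b u * M u v * a v) + t\<^sup>2 * (b u * M u v * b v)"
    by (simp add: algebra_simps power2_eq_square)
  then show ?thesis unfolding bil_def
    by (simp add: sum.distrib sum_distrib_left distrib_left)
qed

lemma bil_sym:
  assumes "\<forall>u\<in>V. \<forall>v\<in>V. M u v = M v u"
  shows "bil M V a b = bil M V b a"
  unfolding bil_def
  apply (subst sum.swap)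
  apply (rule sum.cong, simp)+
  using assms by simp

lemma bil_left: "bil M V a b = (\<Sum>u\<in>V. a u * (\<Sum>v\<in>V. M u v * b v))"
  unfolding bil_def by (simp add: sum_distrib_left mult.assoc)

lemma bil_scale: "bil M V (\<lambda>i. c * a i) (\<lambda>i. c * a i) = c\<^sup>2 * bil M V a a"
  unfolding bil_def by (simp add: sum_distrib_left power2_eq_square algebra_simps)

lemma bil_zero:
  assumes "\<forall>v\<in>V. a v = 0"
  shows "bil M V a a = 0"
  using assms unfolding bil_def by simp

lemma continuous_bil: "continuous_on UNIV (\<lambda>z::'a \<Rightarrow> real. bil M V z z)"
  unfolding bil_def
  by (intro continuous_intros continuous_on_product_coordinates)

lemma continuous_norm2: "continuous_on UNIV (\<lambda>z::'a \<Rightarrow> real. (\<Sum>v\<in>V. (z v)\<^sup>2))"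
  by (intro continuous_intros continuous_on_product_coordinates)

lemma rayleigh_max:
  fixes M :: "'a \<Rightarrow> 'a \<Rightarrow> real"
  assumes fin: "finite V" and ne: "V \<noteq> {}" and sym: "\<forall>u\<in>V. \<forall>v\<in>V. M u v = M v u"
  shows "\<exists>lam z. is_eigenvector M V lam z \<and>
     (\<forall>y. (\<forall>v. v \<notin> V \<longrightarrow> y v = 0) \<longrightarrow> bil M V y y \<le> lam * (\<Sum>v\<in>V. (y v)\<^sup>2))"
proof -
  define N where "N = (\<lambda>z::'a \<Rightarrow> real. \<Sum>v\<in>V. (z v)\<^sup>2)"
  define K :: "('a \<Rightarrow> real) set" where "K = PiE UNIV (\<lambda>i. if i \<in> V then {-1..1} else {0})"
  define S where "S = K \<inter> {z. N z = 1}"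
  have "compactin (product_topology (\<lambda>i. euclidean) UNIV) K"
    unfolding K_def compactin_PiE by auto
  then have cK: "compact K" unfolding euclidean_product_topology by simp
  have "closed {z. N z = 1}" unfolding N_def
    by (rule closed_Collect_eq[OF continuous_norm2]) simp
  then have cS: "compact S" unfolding S_def using cK by auto
  obtain v0 where v0: "v0 \<in> V" using ne by auto
  define e where "e = (\<lambda>i. if i = v0 then 1 else (0::real))"
  have "e \<in> K" unfolding K_def e_def using v0 by auto
  moreover have "N e = 1"
  proof -
    have "N e = (\<Sum>v\<in>V. if v = v0 then 1 else 0)" unfolding N_def
      by (rule sum.cong) (auto simp: e_def)
    then show ?thesis using fin v0 by simp
  qed
  ultimately have Sne: "S \<noteq> {}" unfolding S_def by auto
  obtain z where zS: "z \<in> S" and zmax: "\<And>y. y \<in> S \<Longrightarrow> bil M V y y \<le> bil M V z z"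
    using continuous_attains_sup[OF cS Sne continuous_on_subset[OF continuous_bil subset_UNIV]]
    by blast
  define mu where "mu = bil M V z z"
  have zsupp: "\<forall>v. v \<notin> V \<longrightarrow> z v = 0" 
  proof (intro allI impI)
    fix v assume "v \<notin> V"
    moreover have "z v \<in> (if v \<in> V then {-1..1} else {0})"
      using zS unfolding S_def K_def by (auto simp: PiE_iff)
    ultimately show "z v = 0" by simp
  qed
  have Nz: "N z = 1" using zS unfolding S_def by auto
  have claim1: "bil M V y y \<le> mu * N y" if ys: "\<forall>v. v \<notin> V \<longrightarrow> y v = 0" for y
  proof (cases "N y = 0")
    case True
    then have "\<forall>v\<in>V. y v = 0" unfolding N_def using fin
      by (simp add: sum_nonneg_eq_0_iff)
    then show ?thesis using True bil_zero[of V y M] by simp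
  next
    case False
    have Npos: "N y > 0" using False unfolding N_def
      by (metis (no_types, lifting) sum_nonneg zero_le_power2 order_le_less)
    define s where "s = sqrt (N y)"
    have spos: "s > 0" unfolding s_def using Npos by simp
    have s2: "s\<^sup>2 = N y" unfolding s_def using Npos by simp
    define y' where "y' = (\<lambda>i. (1 / s) * y i)"
    have "N y' = N y / s\<^sup>2" unfolding N_def y'_def
      by (simp add: power_mult_distrib power_divide sum_divide_distrib)
    then have Ny': "N y' = 1" using s2 Npos by simp
    have "y' \<in> K" unfolding K_def
    proof (rule PiE_I)
      fix i
      show "y' i \<in> (if i \<in> V then {-1..1} else {0})"
      proof (cases "i \<in> V")
        case True
        have "(y' i)\<^sup>2 \<le> N y'" unfolding N_def
          using member_le_sum[of i V "\<lambda>v. (y' v)\<^sup>2"] True fin by simp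
        then have "(y' i)\<^sup>2 \<le> 1" using Ny' by simp
        then have "\<bar>y' i\<bar> \<le> 1" by (simp add: abs_square_le_1)
        then show ?thesis using True by auto
      next
        case False
        then show ?thesis using ys unfolding y'_def by simp
      qed
    qed simp
    then have "y' \<in> S" unfolding S_def using Ny' by simp
    then have "bil M V y' y' \<le> mu" using zmax mu_def by simp
    moreover have "bil M V y' y' = bil M V y y / N y"
      unfolding y'_def bil_scale using s2 by (simp add: power_divide)
    ultimately show ?thesis using Npos by (simp add: divide_le_eq mult.commute)
  qed
  define h where "h = (\<lambda>u. if u \<in> V then (\<Sum>v\<in>V. M u v * z v) - mu * z u else 0)"
  have hsupp: "\<forall>v. v \<notin> V \<longrightarrow> h v = 0" unfolding h_def by simp
  define c where "c = bil M V h h - mu * N h"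
  have key: "2 * t * N h + t\<^sup>2 * c \<le> 0" for t
  proof -
    have "\<forall>v. v \<notin> V \<longrightarrow> z v + t * h v = 0" using zsupp hsupp by simp
    from claim1[OF this]
    have "bil M V (\<lambda>i. z i + t * h i) (\<lambda>i. z i + t * h i) \<le> mu * N (\<lambda>i. z i + t * h i)" .
    moreover have "bil M V (\<lambda>i. z i + t * h i) (\<lambda>i. z i + t * h i)
        = mu + 2 * t * bil M V h z + t\<^sup>2 * bil M V h h"
      unfolding bil_expand mu_def using bil_sym[OF sym, of z h] by simp
    moreover have "N (\<lambda>i. z i + t * h i) = N z + 2 * t * (\<Sum>v\<in>V. h v * z v) + t\<^sup>2 * N h"
      unfolding N_def
      by (simp add: power2_sum power_mult_distrib sum.distrib sum_distrib_left algebra_simps)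
    moreover have "bil M V h z - mu * (\<Sum>v\<in>V. h v * z v) = N h"
    proof -
      have "bil M V h z - mu * (\<Sum>v\<in>V. h v * z v)
          = (\<Sum>u\<in>V. h u * ((\<Sum>v\<in>V. M u v * z v) - mu * z u))"
        unfolding bil_left by (simp add: sum_subtractf sum_distrib_left algebra_simps)
      also have "\<dots> = N h" unfolding N_def h_def
        by (rule sum.cong) (simp_all add: power2_eq_square)
      finally show ?thesis .
    qed
    ultimately show ?thesis using Nz unfolding c_def by (simp add: algebra_simps)
  qed
  have Nh0: "N h \<le> 0"
  proof (rule ccontr)
    assume "\<not> N h \<le> 0"
    then have p: "N h > 0" by simp
    define t where "t = N h / (\<bar>c\<bar> + 1)"
    have tpos: "t > 0" unfolding t_def using p by simp
    have "2 * t * N h + t\<^sup>2 * c \<le> 0" by (rule key)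
    then have "t * (2 * N h + t * c) \<le> 0" by (simp add: power2_eq_square algebra_simps)
    then have "2 * N h + t * c \<le> 0" using tpos by (simp add: mult_le_0_iff)
    moreover have "t * \<bar>c\<bar> \<le> N h"
    proof -
      have "t * \<bar>c\<bar> = N h * (\<bar>c\<bar> / (\<bar>c\<bar> + 1))" unfolding t_def by simp
      also have "\<dots> \<le> N h * 1" by (rule mult_left_mono) (use p in auto)
      finally show ?thesis by simp
    qed
    moreover have "- (t * \<bar>c\<bar>) \<le> t * c"
    proof -
      have "-\<bar>c\<bar> \<le> c" by simp
      from mult_left_mono[OF this, of t] tpos show ?thesis by simp
    qed
    ultimately show False using p by linarith
  qed
  have "\<forall>u\<in>V. h u = 0"
  proof -
    have "N h = 0" using Nh0 unfolding N_def by (metis sum_nonneg zero_le_power2 order_antisym)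
    then show ?thesis unfolding N_def using fin by (simp add: sum_nonneg_eq_0_iff)
  qed
  then have eig: "\<forall>u\<in>V. (\<Sum>v\<in>V. M u v * z v) = mu * z u" unfolding h_def by simp
  have "\<exists>v\<in>V. z v \<noteq> 0"
  proof (rule ccontr)
    assume "\<not> (\<exists>v\<in>V. z v \<noteq> 0)"
    then have "N z = 0" unfolding N_def by simp
    then show False using Nz by simp
  qed
  then have "is_eigenvector M V mu z" unfolding is_eigenvector_def using zsupp eig by simp
  then show ?thesis using claim1 unfolding N_def by blast
qed


lemma row_sum:
  assumes G: "simple_graph V E" and u: "u \<in> V"
  shows "(\<Sum>v\<in>V. A_alpha \<alpha> V E u v * x v)
         = \<alpha> * real (Defs.degree V E u) * x u + (1 - \<alpha>) * (\<Sum>v\<in>{v\<in>V. E u v}. x v)"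
proof -
  have fin: "finite V" using G unfolding simple_graph_def by simp
  have "(\<Sum>v\<in>V. A_alpha \<alpha> V E u v * x v)
      = (\<Sum>v\<in>V. (if u = v then \<alpha> * real (Defs.degree V E u) * x u else 0) + (1 - \<alpha>) * (if E u v then x v else 0))"
    unfolding A_alpha_def by (rule sum.cong) (auto simp: algebra_simps)
  also have "\<dots> = \<alpha> * real (Defs.degree V E u) * x u + (1 - \<alpha>) * (\<Sum>v\<in>V. if E u v then x v else 0)"
    using fin u by (simp add: sum.distrib sum_distrib_left[symmetric])
  also have "(\<Sum>v\<in>V. if E u v then x v else 0) = (\<Sum>v\<in>{v\<in>V. E u v}. x v)"
    using fin by (simp add: sum.inter_filter)
  finally show ?thesis .
qed

lemma A_alpha_sym:
  assumes "\<forall>u v. E u v \<longrightarrow> E v u"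
  shows "A_alpha \<alpha> V E u v = A_alpha \<alpha> V E v u"
  using assms unfolding A_alpha_def by auto

lemma lemma3p3_main:
  fixes \<alpha> :: real and V :: "'a set" and E :: "'a \<Rightarrow> 'a \<Rightarrow> bool"
    and x :: "'a \<Rightarrow> real" and w :: 'a
  assumes "0 \<le> \<alpha>"
    and G: "simple_graph V E"
    and "card V \<ge> 2"
    and eig: "is_eigenvector (A_alpha \<alpha> V E) V (lambda_alpha \<alpha> V E) x"
    and nonneg: "\<forall>v\<in>V. x v \<ge> 0"
    and unit: "(\<Sum>v\<in>V. (x v)\<^sup>2) = 1"
    and wV: "w \<in> V" and wmin: "x w = Min (x ` V)"
  shows "lambda_alpha \<alpha> (del_vertex_V V w) (del_vertex_E E w)
           \<ge> lambda_alpha \<alpha> V E * (1 - 2 * (x w)\<^sup>2) / (1 - (x w)\<^sup>2)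
             - \<alpha> * (1 - real (card V) * (x w)\<^sup>2) / (1 - (x w)\<^sup>2)"
proof -
  define L where "L = lambda_alpha \<alpha> V E"
  define V' where "V' = V - {w}"
  define E' where "E' = del_vertex_E E w"
  define M' where "M' = A_alpha \<alpha> V' E'"
  define y where "y = (\<lambda>v. if v \<in> V' then x v else 0)"
  define Nw where "Nw = {v\<in>V. E w v}"
  define n where "n = card V"
  have fin: "finite V" using G unfolding simple_graph_def by simp
  have Esym: "\<And>u v. E u v \<Longrightarrow> E v u" using G unfolding simple_graph_def by blast
  have Eirr: "\<And>u. \<not> E u u" using G unfolding simple_graph_def by blast
  have EV: "\<And>u v. E u v \<Longrightarrow> u \<in> V \<and> v \<in> V" using G unfolding simple_graph_def by blast
  have eqn: "\<And>u. u \<in> V \<Longrightarrow> (\<Sum>v\<in>V. A_alpha \<alpha> V E u v * x v) = L * x u"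
    using eig unfolding is_eigenvector_def L_def by blast
  have finV': "finite V'" unfolding V'_def using fin by simp
  have G': "simple_graph V' E'" using G unfolding simple_graph_def V'_def E'_def del_vertex_E_def by auto
  have xw0: "x w \<ge> 0" using nonneg wV by simp
  have xmin: "\<And>v. v \<in> V \<Longrightarrow> x w \<le> x v" using wmin fin by simp
  have sq_ge: "\<And>v. v \<in> V \<Longrightarrow> (x w)\<^sup>2 \<le> (x v)\<^sup>2"
    using xmin xw0 by (simp add: power_mono)
  obtain v1 where v1: "v1 \<in> V" "v1 \<noteq> w"
  proof -
    have "\<not> V \<subseteq> {w}"
    proof
      assume "V \<subseteq> {w}"
      then have "card V \<le> card {w}" by (rule card_mono[rotated]) simp
      then show False using assms(3) by simp
    qed
    then show ?thesis using that by blast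
  qed
  have V'ne: "V' \<noteq> {}" unfolding V'_def using v1 by auto
  have Vsplit: "(\<Sum>v\<in>V. (x v)\<^sup>2) = (x w)\<^sup>2 + (\<Sum>v\<in>V'. (x v)\<^sup>2)"
    unfolding V'_def using fin wV by (simp add: sum.remove)
  have "(x w)\<^sup>2 + (x v1)\<^sup>2 \<le> (\<Sum>v\<in>V. (x v)\<^sup>2)"
  proof -
    have "(\<Sum>v\<in>{w, v1}. (x v)\<^sup>2) \<le> (\<Sum>v\<in>V. (x v)\<^sup>2)"
      by (rule sum_mono2) (use fin wV v1 in auto)
    then show ?thesis using v1 by simp
  qed
  then have "2 * (x w)\<^sup>2 \<le> 1" using unit sq_ge[OF v1(1)] by simp
  then have Dpos: "1 - (x w)\<^sup>2 > 0" by simp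
  define D where "D = 1 - (x w)\<^sup>2"
  have Ny: "(\<Sum>v\<in>V'. (y v)\<^sup>2) = D" unfolding D_def
    using Vsplit unit by (simp add: y_def)
  have rowp: "(\<Sum>v\<in>V'. M' u v * y v) = L * x u - (if E u w then \<alpha> * x u + (1 - \<alpha>) * x w else 0)"
    if uV': "u \<in> V'" for u
  proof -
    have uV: "u \<in> V" and uw: "u \<noteq> w" using uV' unfolding V'_def by auto
    have set_eq: "{v\<in>V'. E' u v} = {v\<in>V. E u v} - {w}"
      unfolding V'_def E'_def del_vertex_E_def using uw by auto
    have fin2: "finite {v\<in>V. E u v}" using fin by simp
    have deg: "real (Defs.degree V' E' u) = real (Defs.degree V E u) - (if E u w then 1 else 0)"
    proof -
      have "Defs.degree V' E' u = card ({v\<in>V. E u v} - {w})" unfolding Defs.degree_def using set_eq by simp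
      also have "\<dots> = card {v\<in>V. E u v} - (if E u w then 1 else 0)"
        using wV by (simp add: card_Diff_singleton_if)
      finally have dd: "Defs.degree V' E' u = card {v\<in>V. E u v} - (if E u w then 1 else 0)" .
      have c1: "E u w \<Longrightarrow> 0 < card {v\<in>V. E u v}" using fin2 wV by (auto simp: card_gt_0_iff)
      show ?thesis using dd c1 unfolding Defs.degree_def by (cases "E u w") (simp_all add: of_nat_diff)
    qed
    have s: "(\<Sum>v\<in>{v\<in>V'. E' u v}. y v) = (\<Sum>v\<in>{v\<in>V. E u v}. x v) - (if E u w then x w else 0)"
    proof -
      have "(\<Sum>v\<in>{v\<in>V'. E' u v}. y v) = (\<Sum>v\<in>{v\<in>V. E u v} - {w}. x v)"
        unfolding set_eq by (rule sum.cong) (auto simp: y_def V'_def)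
      also have "\<dots> = (\<Sum>v\<in>{v\<in>V. E u v}. x v) - (if E u w then x w else 0)"
        using fin2 wV by (simp add: sum_diff1)
      finally show ?thesis .
    qed
    have "(\<Sum>v\<in>V'. M' u v * y v) = \<alpha> * real (Defs.degree V' E' u) * y u + (1 - \<alpha>) * (\<Sum>v\<in>{v\<in>V'. E' u v}. y v)"
      unfolding M'_def by (rule row_sum[OF G' uV'])
    also have "\<dots> = (\<alpha> * real (Defs.degree V E u) * x u + (1 - \<alpha>) * (\<Sum>v\<in>{v\<in>V. E u v}. x v))
        - (if E u w then \<alpha> * x u + (1 - \<alpha>) * x w else 0)"
      unfolding deg s using uV' by (simp add: y_def algebra_simps)
    also have "\<alpha> * real (Defs.degree V E u) * x u + (1 - \<alpha>) * (\<Sum>v\<in>{v\<in>V. E u v}. x v) = L * x u"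
      using row_sum[OF G uV, of \<alpha> x] eqn[OF uV] by simp
    finally show ?thesis .
  qed
  have wrow: "(1 - \<alpha>) * (\<Sum>v\<in>Nw. x v) = L * x w - \<alpha> * real (card Nw) * x w"
    using row_sum[OF G wV, of \<alpha> x] eqn[OF wV] unfolding Nw_def Defs.degree_def by simp
  have NwV': "Nw = {u\<in>V'. E u w}" unfolding Nw_def V'_def using Esym Eirr by blast
  have bil_eq: "bil M' V' y y = L * D - \<alpha> * (\<Sum>u\<in>Nw. (x u)\<^sup>2) - (1 - \<alpha>) * x w * (\<Sum>u\<in>Nw. x u)"
  proof -
    have "bil M' V' y y = (\<Sum>u\<in>V'. x u * (L * x u - (if E u w then \<alpha> * x u + (1 - \<alpha>) * x w else 0)))"
      unfolding bil_left
    proof (rule sum.cong)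
      fix u assume uV': "u \<in> V'"
      have yu: "y u = x u" using uV' by (simp add: y_def)
      show "y u * (\<Sum>v\<in>V'. M' u v * y v) = x u * (L * x u - (if E u w then \<alpha> * x u + (1 - \<alpha>) * x w else 0))"
        by (simp only: rowp[OF uV'] yu)
    qed simp
    also have "\<dots> = (\<Sum>u\<in>V'. L * (x u)\<^sup>2) - (\<Sum>u\<in>V'. if E u w then \<alpha> * (x u)\<^sup>2 + (1 - \<alpha>) * x w * x u else 0)"
      by (simp add: sum_subtractf[symmetric] power2_eq_square algebra_simps if_distrib cong: if_cong)
    also have "(\<Sum>u\<in>V'. if E u w then \<alpha> * (x u)\<^sup>2 + (1 - \<alpha>) * x w * x u else 0)
        = (\<Sum>u\<in>Nw. \<alpha> * (x u)\<^sup>2 + (1 - \<alpha>) * x w * x u)"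
      unfolding NwV' by (simp only: sum.inter_filter[OF finV'])
    also have "\<dots> = \<alpha> * (\<Sum>u\<in>Nw. (x u)\<^sup>2) + (1 - \<alpha>) * x w * (\<Sum>u\<in>Nw. x u)"
      by (simp add: sum.distrib sum_distrib_left)
    also have "(\<Sum>u\<in>V'. L * (x u)\<^sup>2) = L * D"
      using Vsplit unit unfolding D_def by (simp add: sum_distrib_left[symmetric])
    finally show ?thesis by simp
  qed
  have Nw_sub: "Nw \<subseteq> V" unfolding Nw_def by auto
  have c1: "(\<Sum>u\<in>Nw. (x u)\<^sup>2 - (x w)\<^sup>2) \<le> (\<Sum>u\<in>V. (x u)\<^sup>2 - (x w)\<^sup>2)"
    by (rule sum_mono2) (use fin Nw_sub sq_ge in auto)
  have c2: "(\<Sum>u\<in>V. (x u)\<^sup>2 - (x w)\<^sup>2) = 1 - real n * (x w)\<^sup>2"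
    unfolding n_def using unit by (simp add: sum_subtractf)
  have c3: "(\<Sum>u\<in>Nw. (x u)\<^sup>2 - (x w)\<^sup>2) = (\<Sum>u\<in>Nw. (x u)\<^sup>2) - real (card Nw) * (x w)\<^sup>2"
    by (simp add: sum_subtractf)
  have bil_ge: "bil M' V' y y \<ge> L * (1 - 2 * (x w)\<^sup>2) - \<alpha> * (1 - real n * (x w)\<^sup>2)"
  proof -
    have "(1 - \<alpha>) * x w * (\<Sum>u\<in>Nw. x u) = L * (x w)\<^sup>2 - \<alpha> * real (card Nw) * (x w)\<^sup>2"
      using arg_cong[OF wrow, of "\<lambda>t. x w * t"] by (simp add: algebra_simps power2_eq_square)
    then have "bil M' V' y y = L * (1 - 2 * (x w)\<^sup>2) - \<alpha> * ((\<Sum>u\<in>Nw. (x u)\<^sup>2) - real (card Nw) * (x w)\<^sup>2)"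
      unfolding bil_eq D_def by (simp add: algebra_simps)
    moreover have "\<alpha> * ((\<Sum>u\<in>Nw. (x u)\<^sup>2) - real (card Nw) * (x w)\<^sup>2) \<le> \<alpha> * (1 - real n * (x w)\<^sup>2)"
      using c1 c2 c3 assms(1) by (simp add: mult_left_mono)
    ultimately show ?thesis by simp
  qed
  have M'sym: "\<forall>u\<in>V'. \<forall>v\<in>V'. M' u v = M' v u"
    unfolding M'_def using G' A_alpha_sym unfolding simple_graph_def by metis
  obtain lam0 z where lz: "is_eigenvector M' V' lam0 z"
    and ray: "\<And>y. (\<forall>v. v \<notin> V' \<longrightarrow> y v = 0) \<Longrightarrow> bil M' V' y y \<le> lam0 * (\<Sum>v\<in>V'. (y v)\<^sup>2)"
    using rayleigh_max[OF finV' V'ne M'sym] by blast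
  have "bil M' V' y y \<le> lam0 * D" using ray[of y] Ny unfolding y_def by auto
  have finE: "finite {lam. is_eigenvalue M' V' lam}" by (rule finite_eigenvalues[OF finV'])
  have "lam0 \<in> {lam. is_eigenvalue M' V' lam}" using lz by (auto simp: is_eigenvalue_def)
  then have "lam0 \<le> Max {lam. is_eigenvalue M' V' lam}" by (rule Max_ge[OF finE])
  then have "lam0 \<le> lambda_alpha \<alpha> V' E'" unfolding lambda_alpha_def M'_def .
  have "(L * (1 - 2 * (x w)\<^sup>2) - \<alpha> * (1 - real n * (x w)\<^sup>2)) / D \<le> lam0"
    using bil_ge \<open>bil M' V' y y \<le> lam0 * D\<close> Dpos unfolding D_def by (simp add: divide_le_eq)
  then show ?thesis
    using \<open>lam0 \<le> lambda_alpha \<alpha> V' E'\<close> unfolding L_def n_def D_def V'_def E'_def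
    by (simp add: diff_divide_distrib del_vertex_V_def)
qed

theorem lemma3p3:
  fixes r :: nat and \<alpha> :: real and V :: "'a set" and E :: "'a \<Rightarrow> 'a \<Rightarrow> bool"
    and x :: "'a \<Rightarrow> real" and w :: 'a
  assumes "r \<ge> 2"
    and "0 \<le> \<alpha>" and "\<alpha> \<le> 1 - 1 / real r"
    and "simple_graph V E"
    and "card V \<ge> 2"
    and "is_eigenvector (A_alpha \<alpha> V E) V (lambda_alpha \<alpha> V E) x"
    and "\<forall>v\<in>V. x v \<ge> 0"
    and "(\<Sum>v\<in>V. (x v)\<^sup>2) = 1"
    and "w \<in> V" and "x w = Min (x ` V)"
  shows "lambda_alpha \<alpha> (del_vertex_V V w) (del_vertex_E E w)
           \<ge> lambda_alpha \<alpha> V E * (1 - 2 * (x w)\<^sup>2) / (1 - (x w)\<^sup>2)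
             - \<alpha> * (1 - real (card V) * (x w)\<^sup>2) / (1 - (x w)\<^sup>2)"
  using lemma3p3_main[OF assms(2,4,5,6,7,8,9,10)] .

end
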